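(* Any non-adaptive one-sided tester for submodularity of functions $f:\{0,1\}^n\to\mathbb{R}$ requires $\Omega(\sqrt{n})$ queries. Any adaptive one-sided tester for submodularity requires $\Omega(\log n)$ queries.
   Context: $f$ is submodular if $f(x+\mathbf{e}_i)-f(x)\ge f(y+\mathbf{e}_i)-f(y)$ for all $i$ and $x\le y$ with $x_i=y_i=0$. $f$ is $\epsilon$-far from submodular if every submodular $g$ differs from $f$ on more than an $\epsilon$ fraction of points. A one-sided tester for submodularity (with proximity parameter $\epsilon$) is a randomized algorithm with query access to $f$ that answers YES with probability $1$ if $f$ is submodular and answers NO with probability at least $2/3$ if $f$ is $\epsilon$-far from submodular. It is non-adaptive if its queries do not depend on answers to previous queries. *)

theory Defs
  imports "HOL-Probability.Probability"
begin

text \<open>Points of the hypercube {0,1}^n are represented as subsets of {..<n}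
  (x_i = 1 iff i \<in> x).  A function f : {0,1}^n \<rightarrow> R is a function
  nat set \<Rightarrow> real, of which only the values on cube n matter.\<close>

definition cube :: "nat \<Rightarrow> nat set set" where
  "cube n = Pow {..<n}"

definition submodular_on :: "nat \<Rightarrow> (nat set \<Rightarrow> real) \<Rightarrow> bool" where
  "submodular_on n f \<longleftrightarrow>
     (\<forall>x y i. x \<subseteq> y \<and> y \<subseteq> {..<n} \<and> i < n \<and> i \<notin> y \<longrightarrow>
        f (insert i x) - f x \<ge> f (insert i y) - f y)"

definition eps_far_submod :: "nat \<Rightarrow> real \<Rightarrow> (nat set \<Rightarrow> real) \<Rightarrow> bool" where
  "eps_far_submod n eps f \<longleftrightarrow>
     (\<forall>g. submodular_on n g \<longrightarrow>
        real (card {x \<in> cube n. f x \<noteq> g x}) > eps * 2 ^ n)"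

text \<open>Non-adaptive randomized tester: a random pair (Q, D) of a query list Q
  and a decision rule D applied to the answer list (True = YES).\<close>

definition na_one_sided_tester ::
  "nat \<Rightarrow> real \<Rightarrow> nat \<Rightarrow> ((nat set list \<times> (real list \<Rightarrow> bool)) pmf) \<Rightarrow> bool" where
  "na_one_sided_tester n eps q T \<longleftrightarrow>
     (\<forall>(Q, D) \<in> set_pmf T. length Q \<le> q \<and> set Q \<subseteq> cube n) \<and>
     (\<forall>f. submodular_on n f \<longrightarrow>
        measure_pmf.prob T {(Q, D). D (map f Q)} = 1) \<and>
     (\<forall>f. eps_far_submod n eps f \<longrightarrow>
        measure_pmf.prob T {(Q, D). \<not> D (map f Q)} \<ge> 2/3)"

text \<open>Adaptive deterministic query algorithm: a decision tree.\<close>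

datatype qtree = Leaf bool | Query "nat set" "real \<Rightarrow> qtree"

primrec run :: "qtree \<Rightarrow> (nat set \<Rightarrow> real) \<Rightarrow> bool" where
  "run (Leaf b) f = b"
| "run (Query x k) f = run (k (f x)) f"

primrec qpath :: "qtree \<Rightarrow> (nat set \<Rightarrow> real) \<Rightarrow> nat set list" where
  "qpath (Leaf b) f = []"
| "qpath (Query x k) f = x # qpath (k (f x)) f"

definition ad_one_sided_tester ::
  "nat \<Rightarrow> real \<Rightarrow> nat \<Rightarrow> qtree pmf \<Rightarrow> bool" where
  "ad_one_sided_tester n eps q T \<longleftrightarrow>
     (\<forall>t \<in> set_pmf T. \<forall>f. length (qpath t f) \<le> q \<and> set (qpath t f) \<subseteq> cube n) \<and>
     (\<forall>f. submodular_on n f \<longrightarrow> measure_pmf.prob T {t. run t f} = 1) \<and>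
     (\<forall>f. eps_far_submod n eps f \<longrightarrow> measure_pmf.prob T {t. \<not> run t f} \<ge> 2/3)"

end

theory Submission
  imports Defs
begin


definition GG :: "nat set \<Rightarrow> real" where "GG x = -(3/4) * (real (card x))^2"
definition Hi :: "nat \<Rightarrow> nat set \<Rightarrow> real" where
  "Hi i x = (if (i \<in> x \<longleftrightarrow> Suc i \<in> x) then 1 else 0)"
definition fam :: "nat \<Rightarrow> nat set \<Rightarrow> real" where "fam i x = GG x + Hi i x"
definition ext :: "nat \<Rightarrow> nat set set \<Rightarrow> nat set \<Rightarrow> real" where
  "ext i Q x = GG x + (if x \<in> Q then Hi i x else 1/2)"
definition bad :: "nat \<Rightarrow> nat set set \<Rightarrow> bool" where
  "bad i Q \<longleftrightarrow> (\<exists>x. x \<in> Q \<and> insert i (insert (Suc i) x) \<in> Q \<and> i \<notin> x \<and> Suc i \<notin> x)"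

lemma GG_step: "finite x \<Longrightarrow> a \<notin> x \<Longrightarrow> GG (insert a x) - GG x = -(3/4) * (2 * real (card x) + 1)"
  by (simp add: GG_def power2_eq_square algebra_simps)

lemma sub_gen:
  fixes H :: "nat set \<Rightarrow> real"
  assumes bnd: "\<And>x. 0 \<le> H x \<and> H x \<le> 1"
    and sq: "\<And>x j k. j \<noteq> k \<Longrightarrow> j \<notin> x \<Longrightarrow> k \<notin> x \<Longrightarrow>
       H (insert j x) + H (insert k x) - H x - H (insert j (insert k x)) \<ge> -3/2"
  shows "submodular_on n (\<lambda>x. GG x + H x)"
  unfolding submodular_on_def
proof (intro allI impI)
  fix x y i assume a: "x \<subseteq> y \<and> y \<subseteq> {..<n} \<and> i < n \<and> i \<notin> y"
  have fy: "finite y" using a finite_subset by blast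
  have fx: "finite x" using a fy finite_subset by blast
  have ix: "i \<notin> x" using a by blast
  have le: "card x \<le> card y" using a fy card_mono by blast
  have g: "GG (insert i x) - GG x - (GG (insert i y) - GG y) = 3/2 * (real (card y) - real (card x))"
    using GG_step[OF fx ix] GG_step[OF fy, of i] a by (simp add: algebra_simps)
  consider "card y = card x" | "card y = card x + 1" | "card y \<ge> card x + 2" using le by linarith
  then show "GG (insert i y) + H (insert i y) - (GG y + H y) \<le> GG (insert i x) + H (insert i x) - (GG x + H x)"
  proof cases
    case 1 then have "x = y" using card_subset_eq[OF fy] a by metis
    then show ?thesis by simp
  next
    case 2
    have "card (y - x) = card y - card x" using a fx by (intro card_Diff_subset) auto
    then have "card (y - x) = 1" using 2 by simp
    then obtain k where k: "y - x = {k}" using card_1_singletonE by blast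
    then have yk: "y = insert k x" "k \<notin> x" using a by blast+
    have "k \<noteq> i" using a yk by auto
    then have "H (insert i x) + H (insert k x) - H x - H (insert i (insert k x)) \<ge> -3/2"
      using sq[of i k x] ix yk by blast
    then show ?thesis using g 2 yk by simp
  next
    case 3
    have "H (insert i x) - H x - (H (insert i y) - H y) \<ge> -2" using bnd[of "insert i x"] bnd[of x]
      bnd[of "insert i y"] bnd[of y] by linarith
    moreover have "3/2 * (real (card y) - real (card x)) \<ge> 3" using 3 by simp
    ultimately show ?thesis using g by linarith
  qed
qed

lemma quad: "(a::real) \<in> {0,1/2,1} \<Longrightarrow> b \<in> {0,1/2,1} \<Longrightarrow> c \<in> {0,1/2,1} \<Longrightarrow> d \<in> {0,1/2,1} \<Longrightarrow>
   \<not>(a=0\<and>b=0\<and>c=1\<and>d=1) \<Longrightarrow> a + b - c - d \<ge> -3/2"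
  by auto

lemma Hi_pattern:
  assumes "j \<noteq> k" "j \<notin> x" "k \<notin> x" "Hi i (insert j x) = 0" "Hi i (insert k x) = 0" "Hi i x = 1"
  shows "i \<notin> x \<and> Suc i \<notin> x \<and> insert j (insert k x) = insert i (insert (Suc i) x)"
  using assms unfolding Hi_def by (auto split: if_splits)

lemma ext_sub: assumes "\<not> bad i Q" shows "submodular_on n (ext i Q)"
proof -
  let ?H = "\<lambda>x. if x \<in> Q then Hi i x else 1/2"
  have v: "\<And>x. ?H x \<in> {0,1/2,1}" by (simp add: Hi_def)
  have "submodular_on n (\<lambda>x. GG x + ?H x)"
  proof (rule sub_gen)
    show "\<And>x. 0 \<le> ?H x \<and> ?H x \<le> 1" by (simp add: Hi_def)
  next
    fix x j k assume jk: "(j::nat) \<noteq> k" "j \<notin> x" "k \<notin> x"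
    show "?H (insert j x) + ?H (insert k x) - ?H x - ?H (insert j (insert k x)) \<ge> -3/2"
    proof (rule quad[OF v v v v], rule notI)
      assume p: "?H (insert j x) = 0 \<and> ?H (insert k x) = 0 \<and> ?H x = 1 \<and> ?H (insert j (insert k x)) = 1"
      then have inQ: "insert j x \<in> Q" "insert k x \<in> Q" "x \<in> Q" "insert j (insert k x) \<in> Q"
        by (auto split: if_splits)
      have "i \<notin> x \<and> Suc i \<notin> x \<and> insert j (insert k x) = insert i (insert (Suc i) x)"
        using Hi_pattern[OF jk] p inQ by simp
      then have "bad i Q" unfolding bad_def using inQ by metis
      then show False using assms by simp
    qed
  qed
  then show ?thesis unfolding ext_def .
qed

lemma bad_sub: "{i. bad i Q} \<subseteq> (\<lambda>(x,y). Min (y - x)) ` (Q \<times> Q)"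
proof
  fix i assume "i \<in> {i. bad i Q}"
  then obtain x where x: "x \<in> Q" "insert i (insert (Suc i) x) \<in> Q" "i \<notin> x" "Suc i \<notin> x"
    unfolding bad_def by blast
  have "insert i (insert (Suc i) x) - x = {i, Suc i}" using x by auto
  then have "Min (insert i (insert (Suc i) x) - x) = i" by simp
  then show "i \<in> (\<lambda>(x,y). Min (y - x)) ` (Q \<times> Q)" using x by force
qed

lemma bad_finite: "finite Q \<Longrightarrow> finite {i. bad i Q}"
  by (rule finite_subset[OF bad_sub]) simp

lemma bad_card: assumes "finite Q" shows "card {i. bad i Q} \<le> card Q ^ 2"
proof -
  have "card {i. bad i Q} \<le> card ((\<lambda>(x,y). Min (y - x)) ` (Q \<times> Q))"
    using assms by (intro card_mono[OF _ bad_sub]) auto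
  also have "\<dots> \<le> card (Q \<times> Q)" using assms by (intro card_image_le) simp
  finally show ?thesis by (simp add: card_cartesian_product power2_eq_square)
qed

lemma fam_far: assumes "Suc i < n" shows "eps_far_submod n (1/8) (fam i)"
  unfolding eps_far_submod_def
proof (intro allI impI)
  fix g assume sg: "submodular_on n g"
  define B where "B = Pow ({..<n} - {i, Suc i})"
  define sqr where "sqr x = {x, insert i x, insert (Suc i) x, insert i (insert (Suc i) x)}" for x
  have ex: "\<exists>z \<in> sqr x. fam i z \<noteq> g z" if xB: "x \<in> B" for x
  proof (rule ccontr)
    assume "\<not> ?thesis"
    then have e: "\<forall>z \<in> sqr x. fam i z = g z" by blast
    have xs: "x \<subseteq> {..<n}" "i \<notin> x" "Suc i \<notin> x" using xB B_def by auto
    have fx: "finite x" using xs finite_subset by blast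
    have "g (insert i (insert (Suc i) x)) - g (insert (Suc i) x) \<le> g (insert i x) - g x"
      proof -
        have "insert (Suc i) x \<subseteq> {..<n}" using xs assms by auto
        moreover have "i \<notin> insert (Suc i) x" "i < n" using xs assms by auto
        ultimately show ?thesis using sg unfolding submodular_on_def
          by (metis subset_insertI)
      qed
    moreover have "g (insert i (insert (Suc i) x)) - g (insert (Suc i) x) - (g (insert i x) - g x)
       = fam i (insert i (insert (Suc i) x)) - fam i (insert (Suc i) x) - (fam i (insert i x) - fam i x)"
      using e unfolding sqr_def by simp
    moreover have "fam i (insert i (insert (Suc i) x)) - fam i (insert (Suc i) x) - (fam i (insert i x) - fam i x) = 1/2"
    proof -
      have "GG (insert i (insert (Suc i) x)) - GG (insert (Suc i) x) = -(3/4) * (2 * real (card x + 1) + 1)"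
        using GG_step[of "insert (Suc i) x" i] fx xs by simp
      moreover have "GG (insert i x) - GG x = -(3/4) * (2 * real (card x) + 1)"
        using GG_step fx xs by simp
      ultimately show ?thesis using xs unfolding fam_def Hi_def by (simp add: algebra_simps)
    qed
    ultimately show False by linarith
  qed
  define phi where "phi x = (SOME z. z \<in> sqr x \<and> fam i z \<noteq> g z)" for x
  have phi: "phi x \<in> sqr x \<and> fam i (phi x) \<noteq> g (phi x)" if "x \<in> B" for x
    unfolding phi_def by (rule someI_ex) (use ex[OF that] in blast)
  have bk: "phi x - {i, Suc i} = x" if "x \<in> B" for x
  proof -
    have "phi x \<in> sqr x" using phi[OF that] by blast
    moreover have "i \<notin> x" "Suc i \<notin> x" using that unfolding B_def by auto
    ultimately show ?thesis unfolding sqr_def by auto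
  qed
  have inj: "inj_on phi B" by (metis bk inj_onI)
  have sub: "phi ` B \<subseteq> {x \<in> cube n. fam i x \<noteq> g x}"
  proof
    fix z assume "z \<in> phi ` B"
    then obtain x where x: "x \<in> B" "z = phi x" by blast
    have "z \<in> sqr x" "fam i z \<noteq> g z" using phi[OF x(1)] x(2) by auto
    moreover have "x \<subseteq> {..<n}" using x(1) unfolding B_def by auto
    ultimately have "z \<subseteq> {..<n}" using assms unfolding sqr_def by auto
    then show "z \<in> {x \<in> cube n. fam i x \<noteq> g x}" using \<open>fam i z \<noteq> g z\<close> unfolding cube_def by simp
  qed
  have "card B = 2 ^ (n - 2)"
  proof -
    have "card ({..<n} - {i, Suc i}) = n - 2" using assms by (subst card_Diff_subset) auto
    then show ?thesis unfolding B_def by (simp add: card_Pow)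
  qed
  moreover have "card B \<le> card {x \<in> cube n. fam i x \<noteq> g x}"
    using card_inj_on_le[OF inj sub] by (simp add: cube_def)
  ultimately have c: "2 ^ (n-2) \<le> card {x \<in> cube n. fam i x \<noteq> g x}" by simp
  have "(2::real)^n = 4 * 2^(n-2)" proof -
    have "n = (n-2) + 2" using assms by simp
    then have "(2::real)^n = 2^(n-2) * 2^2" by (metis power_add)
    then show ?thesis by simp
  qed
  then have "1/8 * (2::real)^n < 2^(n-2)" by simp
  also have "\<dots> \<le> real (card {x \<in> cube n. fam i x \<noteq> g x})" using c by (simp add: of_nat_le_iff[symmetric])
  finally show "1/8 * 2^n < real (card {x \<in> cube n. fam i x \<noteq> g x})" .
qed



lemma avg:
  fixes T :: "'a pmf" and W :: "nat \<Rightarrow> 'a set" and m :: nat and K :: real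
  assumes cnt: "\<And>s. s \<in> set_pmf T \<Longrightarrow> real (card {i\<in>{..<m}. s \<in> W i}) \<le> K"
    and p: "\<And>i. i < m \<Longrightarrow> measure_pmf.prob T (W i) \<ge> 2/3"
  shows "2/3 * real m \<le> K"
proof -
  let ?f = "\<lambda>i s. indicator (W i) s :: real"
  have int: "integrable (measure_pmf T) (?f i)" for i
    by (rule measure_pmf.integrable_const_bound[where B=1]) (auto simp: indicator_def)
  have "2/3 * real m = (\<Sum>i<m. 2/3)" by simp
  also have "\<dots> \<le> (\<Sum>i<m. measure_pmf.prob T (W i))" using p by (intro sum_mono) auto
  also have "\<dots> = (\<Sum>i<m. measure_pmf.expectation T (?f i))" by (simp add: integral_indicator)
  also have "\<dots> = measure_pmf.expectation T (\<lambda>s. \<Sum>i<m. ?f i s)"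
    using int by simp
  also have "\<dots> \<le> K"
  proof (rule measure_pmf.integral_le_const)
    show "integrable (measure_pmf T) (\<lambda>s. \<Sum>i<m. ?f i s)" using int by auto
    show "AE s in measure_pmf T. (\<Sum>i<m. ?f i s) \<le> K"
      unfolding AE_measure_pmf_iff
    proof
      fix s assume s: "s \<in> set_pmf T"
      have "(\<Sum>i<m. ?f i s) = real (card {i\<in>{..<m}. s \<in> W i})"
        by (simp add: indicator_def sum.If_cases Int_def)
      also have "\<dots> \<le> K" using cnt[OF s] .
      finally show "(\<Sum>i<m. ?f i s) \<le> K" .
    qed
  qed
  finally show ?thesis .
qed

definition Fam :: "(nat set \<Rightarrow> real) set" where
  "Fam = {f. \<forall>x. f x = GG x \<or> f x = GG x + 1}"

lemma paths_card:
  "F \<subseteq> Fam \<Longrightarrow> (\<forall>f\<in>F. length (qpath t f) \<le> q) \<Longrightarrow> finite (qpath t ` F) \<and> card (qpath t ` F) \<le> 2 ^ q"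
proof (induction t arbitrary: F q)
  case (Leaf b)
  have s: "qpath (Leaf b) ` F \<subseteq> {[]}" by auto
  then have f: "finite (qpath (Leaf b) ` F)" by (rule finite_subset) simp
  have "card (qpath (Leaf b) ` F) \<le> card {[]:: nat set list}" by (rule card_mono[OF _ s]) simp
  also have "\<dots> \<le> 2 ^ q" by simp
  finally show ?case using f by simp
next
  case (Query x k)
  show ?case
  proof (cases "F = {}")
    case True then show ?thesis by simp
  next
    case False
    then obtain f0 where "f0 \<in> F" by blast
    with Query.prems have "q \<ge> 1" by force
    define F0 where "F0 = {f\<in>F. f x = GG x}"
    define F1 where "F1 = {f\<in>F. f x = GG x + 1}"
    have l0: "\<forall>f\<in>F0. length (qpath (k (GG x)) f) \<le> q - 1" using Query.prems unfolding F0_def by force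
    have l1: "\<forall>f\<in>F1. length (qpath (k (GG x + 1)) f) \<le> q - 1" using Query.prems unfolding F1_def by force
    have s0: "F0 \<subseteq> Fam" "F1 \<subseteq> Fam" using Query.prems unfolding F0_def F1_def by auto
    have c0: "finite (qpath (k (GG x)) ` F0) \<and> card (qpath (k (GG x)) ` F0) \<le> 2 ^ (q-1)"
      using Query.IH[of "k (GG x)" F0 "q-1"] l0 s0 by blast
    have c1: "finite (qpath (k (GG x + 1)) ` F1) \<and> card (qpath (k (GG x + 1)) ` F1) \<le> 2 ^ (q-1)"
      using Query.IH[of "k (GG x + 1)" F1 "q-1"] l1 s0 by blast
    let ?U = "qpath (k (GG x)) ` F0 \<union> qpath (k (GG x + 1)) ` F1"
    have sub: "qpath (Query x k) ` F \<subseteq> Cons x ` ?U"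
    proof
      fix p assume "p \<in> qpath (Query x k) ` F"
      then obtain f where f: "f \<in> F" "p = qpath (Query x k) f" by blast
      then have "f x = GG x \<or> f x = GG x + 1" using Query.prems unfolding Fam_def by blast
      then show "p \<in> Cons x ` ?U"
        using f unfolding F0_def F1_def by force
    qed
    have fU: "finite (Cons x ` ?U)" using c0 c1 by simp
    then have fin: "finite (qpath (Query x k) ` F)" using sub finite_subset by blast
    have "card (qpath (Query x k) ` F) \<le> card (Cons x ` ?U)"
      by (rule card_mono[OF fU sub])
    also have "\<dots> = card ?U"
      by (intro card_image) auto
    also have "\<dots> \<le> 2^(q-1) + 2^(q-1)" using card_Un_le[of "qpath (k (GG x)) ` F0" "qpath (k (GG x + 1)) ` F1"] c0 c1 by linarith
    also have "\<dots> = 2^q" using \<open>q \<ge> 1\<close> by (cases q) auto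
    finally show ?thesis using fin by simp
  qed
qed



lemma ext_eq: "x \<in> Q \<Longrightarrow> ext i Q x = fam i x"
  by (simp add: ext_def fam_def)

lemma run_agree: "(\<forall>x\<in>set (qpath t f). g x = f x) \<Longrightarrow> run t g = run t f"
  by (induction t) auto

lemma fam_in: "fam i \<in> Fam"
  unfolding Fam_def fam_def Hi_def by auto

lemma na_bound:
  assumes n: "n \<ge> 2" and T: "na_one_sided_tester n (1/8) q T"
  shows "2/3 * real (n-1) \<le> real q ^ 2"
proof (rule avg[where W="\<lambda>i. {s. bad i (set (fst s))}"])
  fix s assume s: "s \<in> set_pmf T"
  obtain Q D where sQ: "s = (Q, D)" by (cases s)
  have lq: "length Q \<le> q" using T s sQ unfolding na_one_sided_tester_def by auto
  have "card {i\<in>{..<n-1}. s \<in> {s. bad i (set (fst s))}} \<le> card {i. bad i (set Q)}"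
    using sQ by (intro card_mono bad_finite) auto
  also have "\<dots> \<le> card (set Q) ^ 2" by (rule bad_card) simp
  also have "\<dots> \<le> q ^ 2" using card_length[of Q] lq by (intro power_mono) auto
  finally have c: "card {i\<in>{..<n-1}. s \<in> {s. bad i (set (fst s))}} \<le> q ^ 2" .
  show "real (card {i\<in>{..<n-1}. s \<in> {s. bad i (set (fst s))}}) \<le> real q ^ 2"
    using of_nat_mono[OF c, where 'a=real] by simp
next
  fix i assume i: "i < n - 1"
  then have "eps_far_submod n (1/8) (fam i)" by (intro fam_far) auto
  then have p: "measure_pmf.prob T {(Q, D). \<not> D (map (fam i) Q)} \<ge> 2/3"
    using T unfolding na_one_sided_tester_def by blast
  have "measure_pmf.prob T {(Q, D). \<not> D (map (fam i) Q)} \<le> measure_pmf.prob T {s. bad i (set (fst s))}"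
  proof (rule measure_pmf.finite_measure_mono_AE)
    show "{s. bad i (set (fst s))} \<in> measure_pmf.events T" by simp
    show "AE s\<in>{(Q, D). \<not> D (map (fam i) Q)} in measure_pmf T. s \<in> {s. bad i (set (fst s))}"
      unfolding AE_measure_pmf_iff
    proof (intro ballI impI)
      fix s assume s: "s \<in> set_pmf T" and rej: "s \<in> {(Q, D). \<not> D (map (fam i) Q)}"
      obtain Q D where sQ: "s = (Q, D)" by (cases s)
      show "s \<in> {s. bad i (set (fst s))}"
      proof (rule ccontr)
        assume "s \<notin> {s. bad i (set (fst s))}"
        then have nb: "\<not> bad i (set Q)" using sQ by simp
        have sub: "submodular_on n (ext i (set Q))" by (rule ext_sub[OF nb])
        then have "measure_pmf.prob T {(Q', D'). D' (map (ext i (set Q)) Q')} = 1"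
          using T unfolding na_one_sided_tester_def by blast
        then have "AE s in measure_pmf T. s \<in> {(Q', D'). D' (map (ext i (set Q)) Q')}"
          by (rule measure_pmf.AE_prob_1)
        then have "D (map (ext i (set Q)) Q)" using s sQ unfolding AE_measure_pmf_iff by auto
        moreover have "map (ext i (set Q)) Q = map (fam i) Q" by (simp add: ext_eq)
        ultimately show False using rej sQ by simp
      qed
    qed
  qed
  then show "measure_pmf.prob T {s. bad i (set (fst s))} \<ge> 2/3" using p by linarith
qed

lemma ad_bound:
  assumes n: "n \<ge> 2" and T: "ad_one_sided_tester n (1/8) q T"
  shows "2/3 * real (n-1) \<le> 2 ^ q * real q ^ 2"
proof (rule avg[where W="\<lambda>i. {t. bad i (set (qpath t (fam i)))}"])
  fix t assume t: "t \<in> set_pmf T"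
  have lq: "\<And>f. length (qpath t f) \<le> q" using T t unfolding ad_one_sided_tester_def by auto
  let ?P = "qpath t ` (fam ` {..<n-1})"
  have pc: "finite ?P \<and> card ?P \<le> 2 ^ q"
    by (rule paths_card) (use fam_in lq in auto)
  have "{i\<in>{..<n-1}. t \<in> {t. bad i (set (qpath t (fam i)))}} \<subseteq> (\<Union>p\<in>?P. {i. bad i (set p)})"
    by auto
  then have "card {i\<in>{..<n-1}. t \<in> {t. bad i (set (qpath t (fam i)))}} \<le> card (\<Union>p\<in>?P. {i. bad i (set p)})"
    using pc by (intro card_mono) (auto intro: bad_finite)
  also have "\<dots> \<le> (\<Sum>p\<in>?P. card {i. bad i (set p)})" by (rule card_UN_le) (use pc in blast)
  also have "\<dots> \<le> (\<Sum>p\<in>?P. q ^ 2)"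
  proof (rule sum_mono)
    fix p assume "p \<in> ?P"
    then obtain f where "p = qpath t f" by blast
    then have "length p \<le> q" using lq by simp
    have "card {i. bad i (set p)} \<le> card (set p) ^ 2" by (rule bad_card) simp
    also have "\<dots> \<le> q ^ 2" using card_length[of p] \<open>length p \<le> q\<close> by (intro power_mono) auto
    finally show "card {i. bad i (set p)} \<le> q ^ 2" .
  qed
  also have "\<dots> = card ?P * q ^ 2" by simp
  also have "\<dots> \<le> 2 ^ q * q ^ 2" using pc by simp
  finally have c: "card {i\<in>{..<n-1}. t \<in> {t. bad i (set (qpath t (fam i)))}} \<le> 2 ^ q * q ^ 2" .
  show "real (card {i\<in>{..<n-1}. t \<in> {t. bad i (set (qpath t (fam i)))}}) \<le> 2 ^ q * real q ^ 2"
    using of_nat_mono[OF c, where 'a=real] by simp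
next
  fix i assume i: "i < n - 1"
  then have "eps_far_submod n (1/8) (fam i)" by (intro fam_far) auto
  then have p: "measure_pmf.prob T {t. \<not> run t (fam i)} \<ge> 2/3"
    using T unfolding ad_one_sided_tester_def by blast
  have "measure_pmf.prob T {t. \<not> run t (fam i)} \<le> measure_pmf.prob T {t. bad i (set (qpath t (fam i)))}"
  proof (rule measure_pmf.finite_measure_mono_AE)
    show "{t. bad i (set (qpath t (fam i)))} \<in> measure_pmf.events T" by simp
    show "AE t\<in>{t. \<not> run t (fam i)} in measure_pmf T. t \<in> {t. bad i (set (qpath t (fam i)))}"
      unfolding AE_measure_pmf_iff
    proof (intro ballI impI)
      fix t assume t: "t \<in> set_pmf T" and rej: "t \<in> {t. \<not> run t (fam i)}"
      show "t \<in> {t. bad i (set (qpath t (fam i)))}"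
      proof (rule ccontr)
        let ?Q = "set (qpath t (fam i))"
        assume "t \<notin> {t. bad i (set (qpath t (fam i)))}"
        then have nb: "\<not> bad i ?Q" by simp
        have sub: "submodular_on n (ext i ?Q)" by (rule ext_sub[OF nb])
        then have "measure_pmf.prob T {t. run t (ext i ?Q)} = 1"
          using T unfolding ad_one_sided_tester_def by blast
        then have "AE s in measure_pmf T. s \<in> {t. run t (ext i ?Q)}"
          by (rule measure_pmf.AE_prob_1)
        then have "run t (ext i ?Q)" using t unfolding AE_measure_pmf_iff by auto
        moreover have "run t (ext i ?Q) = run t (fam i)" by (rule run_agree) (simp add: ext_eq)
        ultimately show False using rej by simp
      qed
    qed
  qed
  then show "measure_pmf.prob T {t. bad i (set (qpath t (fam i)))} \<ge> 2/3" using p by linarith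
qed

lemma lin_aux: "(3::real) \<le> n \<Longrightarrow> 2/3 * (n - 1) \<le> a \<Longrightarrow> n \<le> 4 * a"
  by (simp add: algebra_simps)

lemma na_final: assumes "n \<ge> 2" "na_one_sided_tester n (1/8) q T"
  shows "real q \<ge> 1/2 * sqrt (real n)"
proof -
  have a: "2/3 * real (n-1) \<le> real q ^ 2" by (rule na_bound[OF assms])
  have "real (n-1) = real n - 1" using assms by simp
  then have b: "real n / 4 \<le> real q ^ 2" using a assms by simp
  have "1/2 * sqrt (real n) = sqrt (real n / 4)" by (simp add: real_sqrt_divide)
  also have "\<dots> \<le> sqrt (real q ^ 2)" using b by (rule real_sqrt_le_mono)
  also have "\<dots> = real q" by simp
  finally show ?thesis .
qed

lemma ad_final: assumes "n \<ge> 3" "ad_one_sided_tester n (1/8) q T"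
  shows "real q \<ge> 1/5 * ln (real n)"
proof -
  have a: "2/3 * real (n-1) \<le> 2 ^ q * real q ^ 2" by (rule ad_bound) (use assms in auto)
  have "real (n-1) = real n - 1" using assms by simp
  then have a': "2/3 * (real n - 1) \<le> 2 ^ q * real q ^ 2" using a by simp
  have qle: "real q \<le> 2 ^ q" using less_exp[of q] by (metis less_imp_le of_nat_le_iff of_nat_numeral of_nat_power)
  have "real q ^ 2 \<le> (2 ^ q) ^ 2" using qle by (intro power_mono) auto
  also have "\<dots> = 4 ^ q"
    by (metis power_mult power_mult_distrib mult.commute numeral_times_numeral semiring_norm(12) semiring_norm(13) power2_eq_square power_even_eq)
  finally have q2: "real q ^ 2 \<le> 4 ^ q" .
  have "2 ^ q * real q ^ 2 \<le> 2 ^ q * 4 ^ q" using q2 by (intro mult_left_mono) auto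
  also have "\<dots> = (8::real) ^ q" by (simp add: power_mult_distrib[symmetric])
  finally have e8: "2/3 * (real n - 1) \<le> 8 ^ q" using a' by linarith
  have q1: "q \<ge> 1"
  proof (rule ccontr)
    assume "\<not> q \<ge> 1" then have "q = 0" by simp
    then show False using e8 assms by simp
  qed
  have "(4::real) \<le> 4 ^ q" using q1 by (metis power_one_right power_increasing one_le_numeral)
  then have "4 * 8 ^ q \<le> 4 ^ q * (8::real) ^ q" by (intro mult_right_mono) auto
  also have "\<dots> = 32 ^ q" by (simp add: power_mult_distrib[symmetric])
  finally have f32: "4 * 8 ^ q \<le> (32::real) ^ q" .
  have "real n \<ge> 3" using assms by simp
  then have "real n \<le> 32 ^ q" using e8 f32
    by (metis (no_types) order_trans[of "real n" "4 * 8 ^ q" "32 ^ q"] lin_aux)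
  then have "ln (real n) \<le> ln (32 ^ q)" using assms by (intro ln_mono) auto
  also have "\<dots> = real q * ln 32" by (simp add: ln_realpow)
  also have "ln (32::real) = 5 * ln 2"
    using ln_realpow[of 2 5] by simp
  also have "ln (2::real) \<le> 1" using ln_le_minus_one[of 2] by simp
  then have "real q * (5 * ln 2) \<le> real q * 5" by (intro mult_left_mono) auto
  finally show ?thesis by simp
qed

theorem corollary3:
  shows "(\<exists>eps>0. \<exists>c>0. \<exists>N. \<forall>n\<ge>N. \<forall>q T.
            na_one_sided_tester n eps q T \<longrightarrow> real q \<ge> c * sqrt (real n)) \<and>
         (\<exists>eps>0. \<exists>c>0. \<exists>N. \<forall>n\<ge>N. \<forall>q T.
            ad_one_sided_tester n eps q T \<longrightarrow> real q \<ge> c * ln (real n))"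
proof
  show "\<exists>eps>0. \<exists>c>0. \<exists>N. \<forall>n\<ge>N. \<forall>q T.
            na_one_sided_tester n eps q T \<longrightarrow> real q \<ge> c * sqrt (real n)"
    by (rule exI[of _ "1/8"], simp, rule exI[of _ "1/2"], simp, rule exI[of _ 2])
       (use na_final in auto)
  show "\<exists>eps>0. \<exists>c>0. \<exists>N. \<forall>n\<ge>N. \<forall>q T.
            ad_one_sided_tester n eps q T \<longrightarrow> real q \<ge> c * ln (real n)"
    by (rule exI[of _ "1/8"], simp, rule exI[of _ "1/5"], simp, rule exI[of _ 3])
       (use ad_final in auto)
qed


end
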